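(* Let $w$ and $w'$ be binary words. If $G(w)$ is not an identity permutation, then $G(w')$ contains $G(w)$ as a pattern if and only if $w'$ contains $w$ as a (not necessarily contiguous) subsequence. If $G(w)$ is the identity permutation $\operatorname{id}_k = 12\cdots k$ of size $k$, then $G(w')$ contains $\operatorname{id}_k$ if and only if $w'$ contains $0^j1^{k-j}$ as a subsequence for some $j \in \{0,1,\dots,k\}$.
   Context: For a binary word $w = w_1\cdots w_n$, let $A = \{i \in [n] : w_i = 0\}$ with $|A| = a$. The permutation $G(w)$ of $[n]$ (one-line notation) has as its first $a$ entries the elements of $A$ in increasing order, followed by the elements of $[n]\setminus A$ in increasing order. Every Grassmannian permutation (at most one descent) arises this way. A permutation $\sigma$ of $[n]$ contains a permutation $\pi$ of $[m]$ if there are indices $h(1)<\dots<h(m)$ with $\sigma_{h(i)}<\sigma_{h(j)}$ iff $\pi_i<\pi_j$; otherwise $\sigma$ avoids $\pi$. $0^j$ denotes $j$ consecutive zeros, and similarly $1^j$. *)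

theory Defs
  imports Main "HOL-Library.Sublist"
begin

text \<open>Binary words are lists over {0,1} (type nat list with all letters in {0,1}).
 Permutations of [n] are given in one-line notation as lists of naturals (values 1..n).\<close>

definition binary_word :: "nat list \<Rightarrow> bool" where
  "binary_word w \<longleftrightarrow> set w \<subseteq> {0, 1}"

definition G :: "nat list \<Rightarrow> nat list" where
  "G w = filter (\<lambda>i. w ! (i - 1) = 0) [1..<length w + 1]
       @ filter (\<lambda>i. w ! (i - 1) \<noteq> 0) [1..<length w + 1]"

definition contains_pattern :: "nat list \<Rightarrow> nat list \<Rightarrow> bool" where
  "contains_pattern \<sigma> \<pi> \<longleftrightarrow>
     (\<exists>h :: nat \<Rightarrow> nat.
        (\<forall>i j. i < j \<and> j < length \<pi> \<longrightarrow> h i < h j) \<and>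
        (\<forall>i < length \<pi>. h i < length \<sigma>) \<and>
        (\<forall>i < length \<pi>. \<forall>j < length \<pi>. (\<sigma> ! h i < \<sigma> ! h j) \<longleftrightarrow> (\<pi> ! i < \<pi> ! j)))"

definition id_perm :: "nat \<Rightarrow> nat list" where
  "id_perm k = [1..<k + 1]"

end

theory Submission
  imports Defs
begin

lemma subseq_of_map:
  assumes "\<forall>i j. i < j \<and> j < length xs \<longrightarrow> f i < f j"
      and "\<forall>i<length xs. f i < length ys \<and> ys ! (f i) = xs ! i"
  shows "subseq xs ys"
  using assms
proof (induction ys arbitrary: xs f)
  case Nil
  then show ?case by (cases xs) auto
next
  case (Cons y ys)
  note mono = Cons.prems(1) and val = Cons.prems(2)
  show ?case
  proof (cases xs)
    case Nil then show ?thesis by simp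
  next
    case (Cons x xs')
    note xs = this
    show ?thesis
    proof (cases "f 0 = 0")
      case True
      have gt: "f (Suc i) > 0" if "i < length xs'" for i
        using mono[rule_format, of 0 "Suc i"] True that xs by simp
      have "subseq xs' ys"
      proof (rule Cons.IH[where f="\<lambda>i. f (Suc i) - 1"])
        show "\<forall>i j. i < j \<and> j < length xs' \<longrightarrow> f (Suc i) - 1 < f (Suc j) - 1"
        proof (intro allI impI)
          fix i j assume a: "i < j \<and> j < length xs'"
          then have "f (Suc i) < f (Suc j)" using mono[rule_format, of "Suc i" "Suc j"] xs by simp
          moreover have "f (Suc i) > 0" using gt a by simp
          ultimately show "f (Suc i) - 1 < f (Suc j) - 1" by simp
        qed
        show "\<forall>i<length xs'. f (Suc i) - 1 < length ys \<and> ys ! (f (Suc i) - 1) = xs' ! i"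
        proof (intro allI impI)
          fix i assume i: "i < length xs'"
          have "f (Suc i) < length (y#ys)" "(y#ys) ! f (Suc i) = xs ! Suc i"
            using val i xs by auto
          then show "f (Suc i) - 1 < length ys \<and> ys ! (f (Suc i) - 1) = xs' ! i"
            using gt[OF i] xs by (cases "f (Suc i)") auto
        qed
      qed
      moreover have "x = y" using val True xs by force
      ultimately show ?thesis using xs by simp
    next
      case False
      have gt: "f i > 0" if "i < length xs" for i
      proof (cases i)
        case 0 then show ?thesis using False by simp
      next
        case (Suc k) then show ?thesis using mono[rule_format, of 0 i] that by simp
      qed
      have "subseq xs ys"
      proof (rule Cons.IH[where f="\<lambda>i. f i - 1"])
        show "\<forall>i j. i < j \<and> j < length xs \<longrightarrow> f i - 1 < f j - 1"
        proof (intro allI impI)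
          fix i j assume a: "i < j \<and> j < length xs"
          then have "f i < f j" using mono by blast
          moreover have "f i > 0" using gt a by simp
          ultimately show "f i - 1 < f j - 1" by simp
        qed
        show "\<forall>i<length xs. f i - 1 < length ys \<and> ys ! (f i - 1) = xs ! i"
        proof (intro allI impI)
          fix i assume i: "i < length xs"
          have "f i < length (y#ys)" "(y#ys) ! f i = xs ! i"
            using val i by auto
          then show "f i - 1 < length ys \<and> ys ! (f i - 1) = xs ! i"
            using gt[OF i] by (cases "f i") auto
        qed
      qed
      then show ?thesis by (rule list_emb_Cons)
    qed
  qed
qed

lemma map_of_subseq:
  assumes "subseq xs ys"
  shows "\<exists>f. (\<forall>i j. i < j \<and> j < length xs \<longrightarrow> f i < f j) \<and>
             (\<forall>i<length xs. f i < length ys \<and> ys ! (f i) = xs ! i)"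
  using assms
proof (induction rule: list_emb.induct)
  case (list_emb_Nil ys)
  then show ?case by auto
next
  case (list_emb_Cons xs ys y)
  then obtain f where f: "\<forall>i j. i < j \<and> j < length xs \<longrightarrow> f i < f j"
     "\<forall>i<length xs. f i < length ys \<and> ys ! (f i) = xs ! i" by blast
  show ?case
    by (rule exI[where x="\<lambda>i. Suc (f i)"]) (use f in auto)
next
  case (list_emb_Cons2 x y xs ys)
  then obtain f where f: "\<forall>i j. i < j \<and> j < length xs \<longrightarrow> f i < f j"
     "\<forall>i<length xs. f i < length ys \<and> ys ! (f i) = xs ! i" by blast
  define g where "g = (\<lambda>i. case i of 0 \<Rightarrow> 0 | Suc i \<Rightarrow> Suc (f i))"
  have 1: "\<forall>i j. i < j \<and> j < length (x # xs) \<longrightarrow> g i < g j"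
  proof (intro allI impI)
    fix i j assume "i < j \<and> j < length (x # xs)"
    then show "g i < g j"
      using f unfolding g_def by (cases i; cases j) auto
  qed
  have 2: "\<forall>i<length (x # xs). g i < length (y # ys) \<and> (y # ys) ! (g i) = (x # xs) ! i"
  proof (intro allI impI)
    fix i assume "i < length (x # xs)"
    then show "g i < length (y # ys) \<and> (y # ys) ! (g i) = (x # xs) ! i"
      using f list_emb_Cons2.hyps unfolding g_def by (cases i) auto
  qed
  show ?case using 1 2 by blast
qed


definition Zs :: "nat list \<Rightarrow> nat list" where
  "Zs w = filter (\<lambda>i. w ! (i - 1) = 0) [1..<length w + 1]"
definition Os :: "nat list \<Rightarrow> nat list" where
  "Os w = filter (\<lambda>i. w ! (i - 1) \<noteq> 0) [1..<length w + 1]"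

lemma G_eq: "G w = Zs w @ Os w"
  by (simp add: G_def Zs_def Os_def)

lemma set_Zs: "set (Zs w) = {i. 1 \<le> i \<and> i \<le> length w \<and> w ! (i - 1) = 0}"
  by (auto simp: Zs_def)

lemma set_Os: "set (Os w) = {i. 1 \<le> i \<and> i \<le> length w \<and> w ! (i - 1) \<noteq> 0}"
  by (auto simp: Os_def)

lemma sorted_Zs: "sorted_wrt (<) (Zs w)"
  unfolding Zs_def by (rule sorted_wrt_filter) (rule sorted_wrt_upt)

lemma sorted_Os: "sorted_wrt (<) (Os w)"
  unfolding Os_def by (rule sorted_wrt_filter) (rule sorted_wrt_upt)

lemma distinct_G: "distinct (G w)"
  by (auto simp: G_eq Zs_def Os_def)

lemma len_G: "length (G w) = length w"
proof -
  have "length (Zs w) + length (Os w) = length [1..<length w + 1]"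
    unfolding Zs_def Os_def by (rule sum_length_filter_compl)
  then show ?thesis by (simp only: G_eq length_append length_upt)
qed

lemma set_G: "set (G w) = {1..length w}"
  by (auto simp: G_eq set_Zs set_Os)

definition idx :: "nat list \<Rightarrow> nat \<Rightarrow> nat" where
  "idx xs v = (SOME i. i < length xs \<and> xs ! i = v)"

lemma idx: "v \<in> set xs \<Longrightarrow> idx xs v < length xs \<and> xs ! idx xs v = v"
  unfolding idx_def by (rule someI_ex) (metis in_set_conv_nth)

lemma sorted_nth_iff:
  fixes xs :: "'a::linorder list"
  assumes "sorted_wrt (<) xs" "i < length xs" "j < length xs"
  shows "xs ! i < xs ! j \<longleftrightarrow> i < j"
proof
  assume "i < j" then show "xs ! i < xs ! j" using assms sorted_wrt_nth_less by blast
next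
  assume h: "xs ! i < xs ! j"
  show "i < j"
  proof (rule ccontr)
    assume "\<not> i < j"
    then have "j < i \<or> j = i" by auto
    then show False
    proof
      assume "j < i" then have "xs ! j < xs ! i" using assms sorted_wrt_nth_less by blast
      then show False using h by simp
    next
      assume "j = i" then show False using h by simp
    qed
  qed
qed

lemma block_app:
  assumes "distinct (xs @ ys)" "k < length (xs @ ys)"
  shows "k < length xs \<longleftrightarrow> (xs @ ys) ! k \<in> set xs"
proof
  assume "k < length xs" then show "(xs @ ys) ! k \<in> set xs" by (simp add: nth_append)
next
  assume h: "(xs @ ys) ! k \<in> set xs"
  show "k < length xs"
  proof (rule ccontr)
    assume "\<not> k < length xs"
    then have "(xs @ ys) ! k = ys ! (k - length xs)" "k - length xs < length ys"
      using assms(2) by (auto simp: nth_append)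
    then have "(xs @ ys) ! k \<in> set ys" by simp
    then show False using h assms(1) by auto
  qed
qed

lemma G_block: "k < length w \<Longrightarrow> (k < length (Zs w) \<longleftrightarrow> G w ! k \<in> set (Zs w))"
  using block_app[of "Zs w" "Os w" k] distinct_G[of w] len_G[of w] by (simp add: G_eq)

lemma G_cmp:
  assumes "i < length w" "j < length w" "i < length (Zs w) \<longleftrightarrow> j < length (Zs w)"
  shows "G w ! i < G w ! j \<longleftrightarrow> i < j"
proof (cases "i < length (Zs w)")
  case True
  then have "j < length (Zs w)" using assms by simp
  then show ?thesis using True sorted_nth_iff[OF sorted_Zs, of i w j] by (simp add: G_eq nth_append)
next
  case False
  then have j: "\<not> j < length (Zs w)" using assms by simp
  have l: "length w = length (Zs w) + length (Os w)" using len_G[of w] by (simp add: G_eq)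
  have "Os w ! (i - length (Zs w)) < Os w ! (j - length (Zs w)) \<longleftrightarrow> i - length (Zs w) < j - length (Zs w)"
    by (rule sorted_nth_iff[OF sorted_Os]) (use assms False j l in auto)
  then show ?thesis using False j by (auto simp: G_eq nth_append)
qed

lemma G_pos: "v \<in> set (G w) \<Longrightarrow> 1 \<le> v \<and> v \<le> length w"
  by (simp add: set_G)

lemma G_nonid:
  assumes "G w \<noteq> id_perm (length w)"
  shows "0 < length (Zs w) \<and> length (Zs w) < length w \<and> G w ! (length (Zs w)) < G w ! (length (Zs w) - 1)"
proof (rule ccontr)
  assume na: "\<not> ?thesis"
  define a where "a = length (Zs w)"
  have l: "length w = a + length (Os w)" using len_G[of w] by (simp add: G_eq a_def)
  have sep: "\<forall>x\<in>set (Zs w). \<forall>y\<in>set (Os w). x < y"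
  proof (intro ballI)
    fix x y assume x: "x \<in> set (Zs w)" and y: "y \<in> set (Os w)"
    then have a0: "0 < a" "a < length w" using l a_def by (auto simp: length_pos_if_in_set)
    have ge: "\<not> G w ! a < G w ! (a - 1)" using na a0 a_def by auto
    have ne: "G w ! a \<noteq> G w ! (a - 1)" using distinct_G[of w] len_G[of w] a0
      by (simp add: nth_eq_iff_index_eq)
    have ga: "G w ! a = Os w ! 0" by (simp add: G_eq nth_append a_def)
    have ga1: "G w ! (a - 1) = Zs w ! (a - 1)" using a0 by (simp add: G_eq nth_append a_def)
    obtain p where p: "p < a" "x = Zs w ! p" using x a_def by (metis in_set_conv_nth)
    obtain q where q: "q < length (Os w)" "y = Os w ! q" using y by (metis in_set_conv_nth)
    have "x \<le> Zs w ! (a - 1)"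
      using p sorted_nth_iff[OF sorted_Zs, of p w "a - 1"] a_def a0
      by (cases "p = a - 1") auto
    moreover have "Os w ! 0 \<le> y"
      using q length_pos_if_in_set[OF y] sorted_nth_iff[OF sorted_Os, of 0 w q] by (cases "q = 0") auto
    ultimately show "x < y" using ge ne ga ga1 by simp
  qed
  have "sorted_wrt (<) (G w)"
    using sorted_Zs sorted_Os sep by (simp add: G_eq sorted_wrt_append)
  moreover have "sorted_wrt (<) (id_perm (length w))" unfolding id_perm_def by (rule sorted_wrt_upt)
  moreover have "set (G w) = set (id_perm (length w))" by (auto simp: set_G id_perm_def)
  ultimately have "G w = id_perm (length w)"
    by (metis strict_sorted_iff sorted_distinct_set_unique)
  then show False using assms by simp
qed

lemma mem_Zs_iff: "v \<in> set (G w) \<Longrightarrow> (v \<in> set (Zs w) \<longleftrightarrow> w ! (v - 1) = 0)"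
  by (auto simp: set_G set_Zs)

lemma pat_back:
  assumes "subseq w w'"
  shows "contains_pattern (G w') (G w)"
proof -
  obtain f where fm: "\<forall>i j. i < j \<and> j < length w \<longrightarrow> f i < f j"
    and fv: "\<forall>i<length w. f i < length w' \<and> w' ! (f i) = w ! i"
    using map_of_subseq[OF assms] by blast
  have fiff: "f p < f q \<longleftrightarrow> p < q" if "p < length w" "q < length w" for p q
    using fm that by (metis linorder_neq_iff order_less_asym)
  define g where "g v = Suc (f (v - 1))" for v
  have gmem: "g v \<in> set (G w') \<and> (g v \<in> set (Zs w') \<longleftrightarrow> v \<in> set (Zs w))"
    if "v \<in> set (G w)" for v
  proof -
    have v: "1 \<le> v" "v \<le> length w" using that by (auto simp: set_G)
    then have "f (v - 1) < length w'" "w' ! f (v - 1) = w ! (v - 1)" using fv by auto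
    then show ?thesis using v by (auto simp: g_def set_G set_Zs)
  qed
  have gmono: "g v < g u \<longleftrightarrow> v < u" if "v \<in> set (G w)" "u \<in> set (G w)" for u v
  proof -
    have "1 \<le> v" "v \<le> length w" "1 \<le> u" "u \<le> length w" using that by (auto simp: set_G)
    then show ?thesis using fiff[of "v - 1" "u - 1"] by (auto simp: g_def)
  qed
  define h where "h i = idx (G w') (g (G w ! i))" for i
  have hG: "h i < length (G w') \<and> G w' ! h i = g (G w ! i)" if "i < length w" for i
  proof -
    have "G w ! i \<in> set (G w)" using that len_G[of w] by simp
    then show ?thesis using gmem idx unfolding h_def by blast
  qed
  have hb: "h i < length (Zs w') \<longleftrightarrow> i < length (Zs w)" if "i < length w" for i
  proof -
    have i': "G w ! i \<in> set (G w)" using that len_G[of w] by simp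
    have "h i < length w'" using hG[OF that] len_G[of w'] by simp
    then have "h i < length (Zs w') \<longleftrightarrow> G w' ! h i \<in> set (Zs w')" by (rule G_block)
    also have "\<dots> \<longleftrightarrow> G w ! i \<in> set (Zs w)" using hG[OF that] gmem[OF i'] by simp
    also have "\<dots> \<longleftrightarrow> i < length (Zs w)" using G_block[OF that] by simp
    finally show ?thesis .
  qed
  show ?thesis unfolding contains_pattern_def
  proof (intro exI[where x=h] conjI allI impI)
    fix i j assume ij: "i < j \<and> j < length (G w)"
    then have i: "i < length w" and j: "j < length w" using len_G[of w] by auto
    show "h i < h j"
    proof (cases "i < length (Zs w) \<longleftrightarrow> j < length (Zs w)")
      case True
      then have "G w ! i < G w ! j" using G_cmp[OF i j] ij by simp
      then have "G w' ! h i < G w' ! h j"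
        using hG[OF i] hG[OF j] gmono i j len_G[of w] by simp
      moreover have "h i < length w'" "h j < length w'" using hG[OF i] hG[OF j] len_G[of w'] by auto
      ultimately show ?thesis using G_cmp[of "h i" w' "h j"] hb[OF i] hb[OF j] True by simp
    next
      case False
      then have "i < length (Zs w)" "\<not> j < length (Zs w)" using ij by auto
      then show ?thesis using hb[OF i] hb[OF j] by simp
    qed
  next
    fix i assume "i < length (G w)"
    then show "h i < length (G w')" using hG len_G[of w] by simp
  next
    fix i j assume i: "i < length (G w)" and j: "j < length (G w)"
    then have i': "i < length w" and j': "j < length w" using len_G[of w] by auto
    show "G w' ! h i < G w' ! h j \<longleftrightarrow> G w ! i < G w ! j"
      using hG[OF i'] hG[OF j'] gmono i j by simp
  qed
qed

lemma pat_forward: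
  assumes bw: "binary_word w" and bw': "binary_word w'"
    and nid: "G w \<noteq> id_perm (length w)"
    and cp: "contains_pattern (G w') (G w)"
  shows "subseq w w'"
proof -
  obtain h where hm: "\<forall>i j. i < j \<and> j < length (G w) \<longrightarrow> h i < h j"
    and hl: "\<forall>i < length (G w). h i < length (G w')"
    and hv: "\<forall>i < length (G w). \<forall>j < length (G w). (G w' ! h i < G w' ! h j) \<longleftrightarrow> (G w ! i < G w ! j)"
    using cp unfolding contains_pattern_def by blast
  define a where "a = length (Zs w)"
  define a' where "a' = length (Zs w')"
  have nw: "length (G w) = length w" "length (G w') = length w'" by (simp_all add: len_G)
  have a: "0 < a" "a < length w" "G w ! a < G w ! (a - 1)" using G_nonid[OF nid] a_def by auto
  have hmono: "h i \<le> h j" if "i \<le> j" "j < length w" for i j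
  proof (cases "i = j")
    case False
    then have "i < j" using that by simp
    then show ?thesis using hm that nw by (metis less_imp_le)
  qed simp
  have key: "h (a - 1) < a' \<and> a' \<le> h a"
  proof -
    have lt: "h (a - 1) < h a" using hm a nw by auto
    have l1: "h (a - 1) < length w'" "h a < length w'" using hl a nw by auto
    have nv: "\<not> G w' ! h (a - 1) < G w' ! h a" using hv a nw by auto
    have "\<not> (h (a - 1) < a' \<longleftrightarrow> h a < a')"
    proof
      assume "h (a - 1) < a' \<longleftrightarrow> h a < a'"
      then have "G w' ! h (a - 1) < G w' ! h a" using G_cmp[OF l1] lt a'_def by simp
      then show False using nv by simp
    qed
    then show ?thesis using lt by auto
  qed
  have hb: "h i < a' \<longleftrightarrow> i < a" if "i < length w" for i
  proof
    assume "h i < a'"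
    show "i < a"
    proof (rule ccontr)
      assume "\<not> i < a" then have "h a \<le> h i" using hmono that by simp
      then show False using key \<open>h i < a'\<close> by simp
    qed
  next
    assume "i < a" then have "h i \<le> h (a - 1)" using hmono a by simp
    then show "h i < a'" using key by simp
  qed
  define ix where "ix p = idx (G w) (Suc p)" for p
  have ix: "ix p < length w \<and> G w ! ix p = Suc p" if "p < length w" for p
  proof -
    have "Suc p \<in> set (G w)" using that by (simp add: set_G)
    then show ?thesis using idx nw unfolding ix_def by metis
  qed
  define f where "f p = G w' ! h (ix p) - 1" for p
  have vmem: "G w' ! h (ix p) \<in> set (G w')" if "p < length w" for p
    using ix[OF that] hl nw by simp
  show ?thesis
  proof (rule subseq_of_map[where f=f], intro allI impI)
    fix p q assume pq: "p < q \<and> q < length w"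
    then have "G w' ! h (ix p) < G w' ! h (ix q)" using hv ix[of p] ix[of q] nw by auto
    moreover have "1 \<le> G w' ! h (ix p)" using G_pos[OF vmem[of p]] pq by simp
    ultimately show "f p < f q" unfolding f_def by simp
  next
    show "\<forall>i<length w. f i < length w' \<and> w' ! f i = w ! i"
    proof (intro allI impI)
      fix p assume p: "p < length w"
      define v where "v = G w' ! h (ix p)"
      have v: "1 \<le> v" "v \<le> length w'" using G_pos vmem[OF p] v_def by auto
      have hix: "h (ix p) < length w'" using hl ix[OF p] nw by simp
      have "w' ! (v - 1) = 0 \<longleftrightarrow> v \<in> set (Zs w')" using v by (auto simp: set_Zs)
      also have "\<dots> \<longleftrightarrow> h (ix p) < a'" using G_block[OF hix] v_def a'_def by simp
      also have "\<dots> \<longleftrightarrow> ix p < a" using hb ix[OF p] by simp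
      also have "\<dots> \<longleftrightarrow> Suc p \<in> set (Zs w)" using G_block[of "ix p" w] ix[OF p] a_def by simp
      also have "\<dots> \<longleftrightarrow> w ! p = 0" using p by (simp add: set_Zs)
      finally have eq0: "w' ! (v - 1) = 0 \<longleftrightarrow> w ! p = 0" .
      have "v - 1 < length w'" using v by simp
      then have "w' ! (v - 1) \<in> set w'" by (rule nth_mem)
      then have "w' ! (v - 1) \<in> {0, 1}" using bw' unfolding binary_word_def by blast
      moreover have "w ! p \<in> set w" using p by (rule nth_mem)
      then have "w ! p \<in> {0, 1}" using bw unfolding binary_word_def by blast
      ultimately have "w' ! (v - 1) = w ! p" using eq0 by auto
      then show "f p < length w' \<and> w' ! f p = w ! p" using v unfolding f_def v_def[symmetric] by simp
    qed
  qed
qed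

lemma G_rep:
  assumes "j \<le> k"
  shows "G (replicate j 0 @ replicate (k - j) (1::nat)) = id_perm k"
proof -
  define u where "u = replicate j 0 @ replicate (k - j) (1::nat)"
  have lu: "length u = k" using assms by (simp add: u_def)
  have un: "u ! (i - 1) = (if i \<le> j then 0 else 1)" if "i \<in> set [1..<k + 1]" for i
    using that assms by (auto simp: u_def nth_append)
  have sp: "[1..<k + 1] = [1..<j + 1] @ [j + 1..<k + 1]"
    using assms upt_add_eq_append[of 1 "j + 1" "k - j"] by simp
  have f1: "filter (\<lambda>i. u ! (i - 1) = 0) [1..<k + 1] = filter (\<lambda>i. i \<le> j) [1..<k + 1]"
    (is "filter ?P _ = filter ?Q _")
  proof (rule filter_cong[OF refl])
    fix i assume "i \<in> set [1..<k + 1]"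
    from un[OF this] show "?P i \<longleftrightarrow> ?Q i" by simp
  qed
  have f2: "filter (\<lambda>i. u ! (i - 1) \<noteq> 0) [1..<k + 1] = filter (\<lambda>i. \<not> i \<le> j) [1..<k + 1]"
    (is "filter ?P _ = filter ?Q _")
  proof (rule filter_cong[OF refl])
    fix i assume "i \<in> set [1..<k + 1]"
    from un[OF this] show "?P i \<longleftrightarrow> ?Q i" by simp
  qed
  have "filter (\<lambda>i. i \<le> j) [1..<k + 1] = [1..<j + 1]"
    unfolding sp by (simp del: upt_Suc)
  moreover have "filter (\<lambda>i. \<not> i \<le> j) [1..<k + 1] = [j + 1..<k + 1]"
    unfolding sp by (simp del: upt_Suc)
  ultimately have "G u = [1..<j + 1] @ [j + 1..<k + 1]"
    unfolding G_def lu f1 f2 by simp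
  then show ?thesis using sp by (simp add: u_def id_perm_def del: upt_Suc)
qed

lemma id_forward:
  assumes bw': "binary_word w'" and cp: "contains_pattern (G w') (id_perm k)"
  shows "\<exists>j \<le> k. subseq (replicate j 0 @ replicate (k - j) 1) w'"
proof -
  have lk: "length (id_perm k) = k" by (simp add: id_perm_def)
  have ik: "id_perm k ! i = Suc i" if "i < k" for i using that by (simp add: id_perm_def del: upt_Suc)
  obtain h where hm: "\<forall>i j. i < j \<and> j < k \<longrightarrow> h i < h j"
    and hl: "\<forall>i < k. h i < length (G w')"
    and hv: "\<forall>i < k. \<forall>j < k. (G w' ! h i < G w' ! h j) \<longleftrightarrow> i < j"
    using cp ik unfolding contains_pattern_def lk by auto
  define a' where "a' = length (Zs w')"
  have nw: "length (G w') = length w'" by (simp add: len_G)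
  have hmono: "h i \<le> h j" if "i \<le> j" "j < k" for i j
  proof (cases "i = j")
    case False
    then have "i < j" using that by simp
    then show ?thesis using hm that by (metis less_imp_le)
  qed simp
  define j0 where "j0 = (LEAST i. i = k \<or> a' \<le> h i)"
  have j0k: "j0 \<le> k" unfolding j0_def by (rule Least_le) simp
  have below: "h i < a'" if "i < j0" for i
    using not_less_Least[OF that[unfolded j0_def]] by simp
  have above: "a' \<le> h i" if "j0 \<le> i" "i < k" for i
  proof -
    have "j0 = k \<or> a' \<le> h j0" unfolding j0_def by (rule LeastI[of _ k]) simp
    then have "a' \<le> h j0" using that by auto
    then show ?thesis using hmono[OF that] by simp
  qed
  define xs where "xs = replicate j0 0 @ replicate (k - j0) (1::nat)"
  have lxs: "length xs = k" using j0k by (simp add: xs_def)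
  have xsn: "xs ! i = (if i < j0 then 0 else 1)" if "i < k" for i
    using that j0k by (auto simp: xs_def nth_append)
  define f where "f i = G w' ! h i - 1" for i
  have vmem: "G w' ! h i \<in> set (G w')" if "i < k" for i
    using hl that by simp
  have "subseq xs w'"
  proof (rule subseq_of_map[where f=f], intro allI impI)
    fix p q assume pq: "p < q \<and> q < length xs"
    then have "G w' ! h p < G w' ! h q" using hv lxs by auto
    moreover have "1 \<le> G w' ! h p" using G_pos[OF vmem[of p]] pq lxs by simp
    ultimately show "f p < f q" unfolding f_def by simp
  next
    show "\<forall>i<length xs. f i < length w' \<and> w' ! f i = xs ! i"
    proof (intro allI impI)
      fix p assume p: "p < length xs"
      then have pk: "p < k" using lxs by simp
      define v where "v = G w' ! h p"
      have v: "1 \<le> v" "v \<le> length w'" using G_pos vmem[OF pk] v_def by auto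
      have hix: "h p < length w'" using hl pk nw by simp
      have "w' ! (v - 1) = 0 \<longleftrightarrow> v \<in> set (Zs w')" using v by (auto simp: set_Zs)
      also have "\<dots> \<longleftrightarrow> h p < a'" using G_block[OF hix] v_def a'_def by simp
      also have "\<dots> \<longleftrightarrow> p < j0" using below above pk by (meson not_less)
      finally have eq0: "w' ! (v - 1) = 0 \<longleftrightarrow> p < j0" .
      have "v - 1 < length w'" using v by simp
      then have "w' ! (v - 1) \<in> set w'" by (rule nth_mem)
      then have "w' ! (v - 1) \<in> {0, 1}" using bw' unfolding binary_word_def by blast
      then have "w' ! (v - 1) = xs ! p" using eq0 xsn[OF pk] by auto
      then show "f p < length w' \<and> w' ! f p = xs ! p" using v unfolding f_def v_def[symmetric] by simp
    qed
  qed
  then show ?thesis using j0k unfolding xs_def by blast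
qed

theorem mainTheorem2:
  fixes w w' :: "nat list"
  assumes "binary_word w" and "binary_word w'"
  shows "(G w \<noteq> id_perm (length w) \<longrightarrow>
            (contains_pattern (G w') (G w) \<longleftrightarrow> subseq w w'))
       \<and> (\<forall>k. G w = id_perm k \<longrightarrow>
            (contains_pattern (G w') (id_perm k) \<longleftrightarrow>
               (\<exists>j \<le> k. subseq (replicate j 0 @ replicate (k - j) 1) w')))"
proof (intro conjI impI allI)
  assume "G w \<noteq> id_perm (length w)"
  then show "contains_pattern (G w') (G w) \<longleftrightarrow> subseq w w'"
    using pat_forward[OF assms] pat_back by blast
next
  fix k
  show "contains_pattern (G w') (id_perm k) \<longleftrightarrow>
               (\<exists>j \<le> k. subseq (replicate j 0 @ replicate (k - j) 1) w')"
  proof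
    assume "contains_pattern (G w') (id_perm k)"
    then show "\<exists>j \<le> k. subseq (replicate j 0 @ replicate (k - j) 1) w'"
      using id_forward[OF assms(2)] by blast
  next
    assume "\<exists>j \<le> k. subseq (replicate j 0 @ replicate (k - j) 1) w'"
    then obtain j where j: "j \<le> k" "subseq (replicate j 0 @ replicate (k - j) 1) w'" by blast
    show "contains_pattern (G w') (id_perm k)"
      using pat_back[OF j(2)] G_rep[OF j(1)] by simp
  qed
qed
end
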